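(* Let $S'$ be a martingale on $2^{<\omega}$ with $\mathrm{Var}(S'\mid\bot)<\infty$, and let $c>S'(\bot)$. Then for every real $\hat c\ge 0$ there exists a martingale $S$ such that $S(\bot)<c$, $S(\rho)>S'(\rho)$ for all $\rho\in2^{<\omega}$, and for some $t\in\omega$, $S(\rho)>S'(\rho)+\hat c\sqrt{\mathrm{Var}(S'\mid\rho)}$ for all $\rho\in 2^t$.
   Context: A martingale is a function $S:2^{<\omega}\to\mathbb{R}^{\ge0}$ with $2S(\rho)=S(\rho0)+S(\rho1)$ for all $\rho$; $\bot$ is the empty string. For a martingale $S$ and $\rho\in2^{<\omega}$, $\mathrm{Var}(S\mid\rho)=\lim_{t\to\infty}2^{-(t-|\rho|)}\sum_{\sigma\in 2^t,\ \sigma\succeq\rho}(S(\sigma)-S(\rho))^2$. *)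

theory Defs
  imports "HOL-Analysis.Analysis" "HOL-Library.Sublist"
begin

text \<open>Binary strings 2^{<omega} are modelled as bool lists; the empty list is bot.
  rho0 = rho @ [False], rho1 = rho @ [True].\<close>

definition martingale :: "(bool list \<Rightarrow> real) \<Rightarrow> bool" where
  "martingale S \<longleftrightarrow> (\<forall>\<rho>. S \<rho> \<ge> 0) \<and>
     (\<forall>\<rho>. 2 * S \<rho> = S (\<rho> @ [False]) + S (\<rho> @ [True]))"

definition var_approx :: "(bool list \<Rightarrow> real) \<Rightarrow> bool list \<Rightarrow> nat \<Rightarrow> real" where
  "var_approx S \<rho> t = inverse (2 ^ (t - length \<rho>)) *
     (\<Sum>\<sigma>\<in>{\<sigma>. length \<sigma> = t \<and> prefix \<rho> \<sigma>}. (S \<sigma> - S \<rho>)\<^sup>2)"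

definition Var :: "(bool list \<Rightarrow> real) \<Rightarrow> bool list \<Rightarrow> ereal" where
  "Var S \<rho> = lim (\<lambda>t. ereal (var_approx S \<rho> t))"

end

theory Submission imports Defs begin

definition lv :: "nat \<Rightarrow> bool list set" where "lv n = {\<tau>. length \<tau> = n}"

lemma lv_Suc_cons: "lv (Suc n) = Cons False ` lv n \<union> Cons True ` lv n"
proof -
  have "\<tau> \<in> Cons False ` lv n \<union> Cons True ` lv n" if l: "length \<tau> = Suc n" for \<tau>
  proof -
    obtain b r where e: "\<tau> = b # r" and "length r = n" using l by (cases \<tau>) auto
    then have "r \<in> lv n" by (simp add: lv_def)
    then show ?thesis using e by (cases b) auto
  qed
  then show ?thesis unfolding lv_def by auto
qed

lemma lv_Suc_snoc: "lv (Suc n) = (\<lambda>\<tau>. \<tau> @ [False]) ` lv n \<union> (\<lambda>\<tau>. \<tau> @ [True]) ` lv n"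
proof -
  have "\<tau> \<in> (\<lambda>\<tau>. \<tau> @ [False]) ` lv n \<union> (\<lambda>\<tau>. \<tau> @ [True]) ` lv n" if "length \<tau> = Suc n" for \<tau>
  proof -
    have ne: "\<tau> \<noteq> []" using that by auto
    have e: "\<tau> = butlast \<tau> @ [last \<tau>]" using ne by simp
    have "butlast \<tau> \<in> lv n" using that by (simp add: lv_def)
    then show ?thesis using e by (cases "last \<tau>") auto
  qed
  then show ?thesis unfolding lv_def by auto
qed

lemma lv_finite: "finite (lv n)"
proof (induction n)
  case 0 show ?case by (simp add: lv_def)
next
  case (Suc n) then show ?case unfolding lv_Suc_cons by simp
qed

lemma lv_nonempty: "lv n \<noteq> {}"
  unfolding lv_def by (metis (mono_tags) empty_iff length_replicate mem_Collect_eq)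

lemma sum_lv_cons: "sum g (lv (Suc n)) = (\<Sum>\<tau>\<in>lv n. g (False#\<tau>) + g (True#\<tau>))"
proof -
  have "sum g (lv (Suc n)) = sum g (Cons False ` lv n) + sum g (Cons True ` lv n)"
    unfolding lv_Suc_cons by (rule sum.union_disjoint) (auto simp: lv_finite)
  also have "\<dots> = (\<Sum>\<tau>\<in>lv n. g (False#\<tau>)) + (\<Sum>\<tau>\<in>lv n. g (True#\<tau>))"
    by (simp add: sum.reindex)
  finally show ?thesis by (simp add: sum.distrib)
qed

lemma sum_lv_snoc: "sum g (lv (Suc n)) = (\<Sum>\<tau>\<in>lv n. g (\<tau>@[False]) + g (\<tau>@[True]))"
proof -
  have "sum g (lv (Suc n)) = sum g ((\<lambda>\<tau>. \<tau> @ [False]) ` lv n) + sum g ((\<lambda>\<tau>. \<tau> @ [True]) ` lv n)"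
    unfolding lv_Suc_snoc by (rule sum.union_disjoint) (auto simp: lv_finite)
  also have "\<dots> = (\<Sum>\<tau>\<in>lv n. g (\<tau>@[False])) + (\<Sum>\<tau>\<in>lv n. g (\<tau>@[True]))"
    by (simp add: sum.reindex inj_on_def)
  finally show ?thesis by (simp add: sum.distrib)
qed

lemma card_lv: "card (lv n) = 2 ^ n"
proof (induction n)
  case 0 then show ?case by (simp add: lv_def)
next
  case (Suc n)
  have "card (lv (Suc n)) = (\<Sum>\<tau>\<in>lv (Suc n). 1)" by simp
  also have "\<dots> = (\<Sum>\<tau>\<in>lv n. 2)" by (subst sum_lv_cons) simp
  also have "\<dots> = 2 * card (lv n)" by simp
  finally show ?case using Suc by simp
qed

lemma lv0: "lv 0 = {[]}" by (auto simp: lv_def)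

lemma mart_sum:
  assumes "martingale S"
  shows "(\<Sum>\<tau>\<in>lv n. S (\<rho> @ \<tau>)) = 2 ^ n * S \<rho>"
proof (induction n)
  case 0 then show ?case by (simp add: lv0)
next
  case (Suc n)
  have "(\<Sum>\<tau>\<in>lv (Suc n). S (\<rho> @ \<tau>)) = (\<Sum>\<tau>\<in>lv n. 2 * S (\<rho> @ \<tau>))"
  proof (subst sum_lv_snoc, rule sum.cong)
    fix \<tau> show "S (\<rho> @ \<tau> @ [False]) + S (\<rho> @ \<tau> @ [True]) = 2 * S (\<rho> @ \<tau>)"
      using assms unfolding martingale_def by (metis append_assoc)
  qed simp
  also have "\<dots> = 2 * 2 ^ n * S \<rho>" using Suc by (simp add: sum_distrib_left[symmetric])
  finally show ?case by simp
qed

definition Q :: "(bool list \<Rightarrow> real) \<Rightarrow> bool list \<Rightarrow> nat \<Rightarrow> real" where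
  "Q S \<rho> n = (\<Sum>\<tau>\<in>lv n. (S (\<rho> @ \<tau>) - S \<rho>)\<^sup>2)"

definition aa :: "(bool list \<Rightarrow> real) \<Rightarrow> bool list \<Rightarrow> nat \<Rightarrow> real" where
  "aa S \<rho> n = Q S \<rho> n / 2 ^ n"

lemma Q_nonneg: "Q S \<rho> n \<ge> 0" unfolding Q_def by (simp add: sum_nonneg)
lemma aa_nonneg: "aa S \<rho> n \<ge> 0" unfolding aa_def by (simp add: Q_nonneg)
lemma aa0: "aa S \<rho> 0 = 0" by (simp add: aa_def Q_def lv0)

lemma sq_ineq:
  fixes x y z s :: real
  assumes "2 * x = y + z"
  shows "2 * (x - s)\<^sup>2 \<le> (y - s)\<^sup>2 + (z - s)\<^sup>2"
proof -
  have x: "x = (y + z) / 2" using assms by simp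
  have "(y - s)\<^sup>2 + (z - s)\<^sup>2 - 2 * (x - s)\<^sup>2 = (y - z)\<^sup>2 / 2"
    unfolding x by (simp add: power2_eq_square field_simps)
  moreover have "(y - z)\<^sup>2 / 2 \<ge> 0" by simp
  ultimately show ?thesis by linarith
qed

lemma Q_Suc:
  assumes "martingale S"
  shows "Q S \<rho> (Suc n) \<ge> 2 * Q S \<rho> n"
proof -
  have "Q S \<rho> (Suc n) = (\<Sum>\<tau>\<in>lv n. (S (\<rho> @ \<tau> @ [False]) - S \<rho>)\<^sup>2 + (S (\<rho> @ \<tau> @ [True]) - S \<rho>)\<^sup>2)"
    unfolding Q_def by (subst sum_lv_snoc) simp
  also have "\<dots> \<ge> (\<Sum>\<tau>\<in>lv n. 2 * (S (\<rho> @ \<tau>) - S \<rho>)\<^sup>2)"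
  proof (rule sum_mono)
    fix \<tau>
    have m: "2 * S (\<rho> @ \<tau>) = S (\<rho> @ \<tau> @ [False]) + S (\<rho> @ \<tau> @ [True])"
      using assms unfolding martingale_def by (metis append_assoc)
    show "2 * (S (\<rho> @ \<tau>) - S \<rho>)\<^sup>2 \<le> (S (\<rho> @ \<tau> @ [False]) - S \<rho>)\<^sup>2 + (S (\<rho> @ \<tau> @ [True]) - S \<rho>)\<^sup>2"
      using sq_ineq[OF m] .
  qed
  finally show ?thesis by (simp add: Q_def sum_distrib_left)
qed

lemma aa_incseq: assumes "martingale S" shows "incseq (aa S \<rho>)"
proof (rule incseq_SucI)
  fix n
  have "aa S \<rho> n = 2 * Q S \<rho> n / 2 ^ Suc n" by (simp add: aa_def)
  also have "\<dots> \<le> aa S \<rho> (Suc n)" unfolding aa_def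
    by (rule divide_right_mono) (use Q_Suc[OF assms] in auto)
  finally show "aa S \<rho> n \<le> aa S \<rho> (Suc n)" .
qed

lemma va_shift: "var_approx S \<rho> (n + length \<rho>) = aa S \<rho> n"
proof -
  have set: "{\<sigma>. length \<sigma> = n + length \<rho> \<and> prefix \<rho> \<sigma>} = (\<lambda>\<tau>. \<rho> @ \<tau>) ` lv n"
    by (auto simp: lv_def prefix_def)
  have "(\<Sum>\<sigma>\<in>{\<sigma>. length \<sigma> = n + length \<rho> \<and> prefix \<rho> \<sigma>}. (S \<sigma> - S \<rho>)\<^sup>2) = Q S \<rho> n"
    unfolding set Q_def by (subst sum.reindex) (auto simp: inj_on_def)
  then show ?thesis unfolding var_approx_def aa_def by (simp add: field_simps)
qed

lemma Var_eq:
  assumes "aa S \<rho> \<longlonglongrightarrow> L"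
  shows "Var S \<rho> = ereal L"
proof -
  have "(\<lambda>n. ereal (var_approx S \<rho> (n + length \<rho>))) \<longlonglongrightarrow> ereal L"
    unfolding va_shift using assms by (intro tendsto_intros)
  then have "(\<lambda>n. ereal (var_approx S \<rho> n)) \<longlonglongrightarrow> ereal L"
    by (rule LIMSEQ_offset)
  then show ?thesis unfolding Var_def by (rule limI)
qed

lemma Var_nil: "Var S [] = lim (\<lambda>n. ereal (aa S [] n))"
  unfolding Var_def using va_shift[of S "[]"] by simp

lemma inner_decomp:
  assumes "martingale S"
  shows "(\<Sum>\<tau>\<in>lv n. (S (\<rho> @ \<tau>) - c)\<^sup>2) = Q S \<rho> n + 2 ^ n * (S \<rho> - c)\<^sup>2"
proof -
  have "(\<Sum>\<tau>\<in>lv n. (S (\<rho> @ \<tau>) - c)\<^sup>2)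
      = (\<Sum>\<tau>\<in>lv n. (S (\<rho> @ \<tau>) - S \<rho>)\<^sup>2 + 2 * (S \<rho> - c) * (S (\<rho> @ \<tau>) - S \<rho>) + (S \<rho> - c)\<^sup>2)"
    by (rule sum.cong) (auto simp: power2_eq_square algebra_simps)
  also have "\<dots> = Q S \<rho> n + 2 * (S \<rho> - c) * (\<Sum>\<tau>\<in>lv n. S (\<rho> @ \<tau>) - S \<rho>) + 2 ^ n * (S \<rho> - c)\<^sup>2"
    by (simp add: sum.distrib sum_distrib_left Q_def card_lv)
  also have "(\<Sum>\<tau>\<in>lv n. S (\<rho> @ \<tau>) - S \<rho>) = 0"
    by (simp add: sum_subtractf mart_sum[OF assms] card_lv)
  finally show ?thesis by simp
qed

lemma decomp:
  assumes "martingale S"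
  shows "Q S [] (t + n) = (\<Sum>\<rho>\<in>lv t. Q S \<rho> n) + 2 ^ n * Q S [] t"
proof -
  have img: "lv (t + n) = (\<lambda>(\<rho>, \<tau>). \<rho> @ \<tau>) ` (lv t \<times> lv n)"
  proof
    show "lv (t + n) \<subseteq> (\<lambda>(\<rho>, \<tau>). \<rho> @ \<tau>) ` (lv t \<times> lv n)"
    proof
      fix \<sigma> assume "\<sigma> \<in> lv (t + n)"
      then have "(take t \<sigma>, drop t \<sigma>) \<in> lv t \<times> lv n" by (auto simp: lv_def)
      then show "\<sigma> \<in> (\<lambda>(\<rho>, \<tau>). \<rho> @ \<tau>) ` (lv t \<times> lv n)"
        by (metis (no_types, lifting) append_take_drop_id case_prod_conv image_eqI)
    qed
  qed (auto simp: lv_def)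
  have inj: "inj_on (\<lambda>(\<rho>, \<tau>). \<rho> @ \<tau>) (lv t \<times> lv n)"
    by (auto simp: inj_on_def lv_def)
  have "Q S [] (t + n) = (\<Sum>(\<rho>, \<tau>)\<in>lv t \<times> lv n. (S (\<rho> @ \<tau>) - S [])\<^sup>2)"
    unfolding Q_def img by (subst sum.reindex[OF inj]) (simp add: comp_def case_prod_unfold)
  also have "\<dots> = (\<Sum>\<rho>\<in>lv t. \<Sum>\<tau>\<in>lv n. (S (\<rho> @ \<tau>) - S [])\<^sup>2)"
    by (subst sum.cartesian_product) simp
  also have "\<dots> = (\<Sum>\<rho>\<in>lv t. Q S \<rho> n + 2 ^ n * (S \<rho> - S [])\<^sup>2)"
    by (simp add: inner_decomp[OF assms])
  also have "\<dots> = (\<Sum>\<rho>\<in>lv t. Q S \<rho> n) + 2 ^ n * Q S [] t"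
    by (simp add: sum.distrib sum_distrib_left Q_def)
  finally show ?thesis .
qed

definition avg :: "(bool list \<Rightarrow> real) \<Rightarrow> bool list \<Rightarrow> nat \<Rightarrow> real" where
  "avg F \<rho> n = (\<Sum>\<tau>\<in>lv n. F (\<rho> @ \<tau>)) / 2 ^ n"

lemma avg0: "avg F \<rho> 0 = F \<rho>" by (simp add: avg_def lv0)

lemma avg_Suc: "2 * avg F \<rho> (Suc n) = avg F (\<rho> @ [False]) n + avg F (\<rho> @ [True]) n"
  unfolding avg_def by (subst sum_lv_cons) (simp add: sum.distrib add_divide_distrib)

lemma avg_pos: assumes "\<And>\<sigma>. F \<sigma> > 0" shows "avg F \<rho> n > 0"
  unfolding avg_def using assms lv_finite lv_nonempty by (intro divide_pos_pos sum_pos) auto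

lemma D_mart:
  assumes "\<And>\<sigma>. f \<sigma> > 0"
  shows "martingale (\<lambda>\<rho>. avg (\<lambda>\<sigma>. f (take t \<sigma>)) \<rho> (t - length \<rho>))"
  unfolding martingale_def
proof (intro conjI allI)
  fix \<rho>
  show "avg (\<lambda>\<sigma>. f (take t \<sigma>)) \<rho> (t - length \<rho>) \<ge> 0"
    using avg_pos[of "\<lambda>\<sigma>. f (take t \<sigma>)"] assms by (simp add: less_imp_le)
  show "2 * avg (\<lambda>\<sigma>. f (take t \<sigma>)) \<rho> (t - length \<rho>) =
    avg (\<lambda>\<sigma>. f (take t \<sigma>)) (\<rho> @ [False]) (t - length (\<rho> @ [False])) +
    avg (\<lambda>\<sigma>. f (take t \<sigma>)) (\<rho> @ [True]) (t - length (\<rho> @ [True]))"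
  proof (cases "length \<rho> < t")
    case True
    then have e: "t - length \<rho> = Suc (t - length (\<rho> @ [False]))" "t - length (\<rho> @ [True]) = t - length (\<rho> @ [False])"
      by auto
    show ?thesis unfolding e by (rule avg_Suc)
  next
    case False
    then show ?thesis by (simp add: avg0)
  qed
qed

lemma sqrt_le_eta: fixes x e :: real assumes "x \<ge> 0" "e > 0" shows "sqrt x \<le> e + x / e"
proof (cases "sqrt x \<le> e")
  case True then show ?thesis using assms by (simp add: add_increasing2)
next
  case False
  then have "sqrt x * e \<le> sqrt x * sqrt x" using assms by (intro mult_left_mono) auto
  also have "\<dots> = x" using assms by simp
  finally have "sqrt x \<le> x / e" using assms by (simp add: pos_le_divide_eq)
  then show ?thesis using assms by simp
qed

lemma sumaa:
  assumes "martingale S"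
  shows "(\<Sum>\<rho>\<in>lv t. aa S \<rho> n) = 2 ^ t * (aa S [] (t + n) - aa S [] t)"
proof -
  have "(\<Sum>\<rho>\<in>lv t. aa S \<rho> n) = (\<Sum>\<rho>\<in>lv t. Q S \<rho> n) / 2 ^ n"
    unfolding aa_def by (simp add: sum_divide_distrib)
  also have "\<dots> = (Q S [] (t + n) - 2 ^ n * Q S [] t) / 2 ^ n"
    using decomp[OF assms, of t n] by simp
  also have "\<dots> = 2 ^ t * (aa S [] (t + n) - aa S [] t)"
    unfolding aa_def by (simp add: field_simps power_add)
  finally show ?thesis .
qed

theorem lemma3p4:
  fixes S' :: "bool list \<Rightarrow> real" and c chat :: real
  assumes "martingale S'"
    and "Var S' [] < \<infinity>"
    and "c > S' []"
    and "chat \<ge> 0"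
  shows "\<exists>S. martingale S \<and> S [] < c \<and> (\<forall>\<rho>. S \<rho> > S' \<rho>) \<and>
           (\<exists>t::nat. \<forall>\<rho>. length \<rho> = t \<longrightarrow>
              S \<rho> > S' \<rho> + chat * sqrt (real_of_ereal (Var S' \<rho>)))"
proof -
  note mS = assms(1)
  let ?a = "aa S' []"
  have inc: "incseq ?a" by (rule aa_incseq[OF mS])
  have "incseq (\<lambda>n. ereal (?a n))" using inc unfolding incseq_def by simp
  then have "(\<lambda>n. ereal (?a n)) \<longlonglongrightarrow> (SUP n. ereal (?a n))" by (rule LIMSEQ_SUP)
  then have VS: "Var S' [] = (SUP n. ereal (?a n))" unfolding Var_nil by (rule limI)
  have ge: "ereal (?a n) \<le> Var S' []" for n unfolding VS by (rule SUP_upper) simp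
  have "Var S' [] \<noteq> -\<infinity>" using ge[of 0] by auto
  then obtain B where VB: "Var S' [] = ereal B" using assms(2) by (cases "Var S' []") auto
  have bnd: "?a n \<le> B" for n using ge[of n] unfolding VB by simp
  define V0 where "V0 = (SUP n. ?a n)"
  have conv: "?a \<longlonglongrightarrow> V0" unfolding V0_def
    by (rule LIMSEQ_incseq_SUP[OF _ inc]) (use bnd in \<open>auto intro!: bdd_aboveI2\<close>)
  have le: "?a n \<le> V0" for n by (rule incseq_le[OF inc conv])
  define eps where "eps = c - S' []"
  have eps: "eps > 0" using assms(3) by (simp add: eps_def)
  define \<eta> where "\<eta> = eps / (4 * (chat + 1))"
  have eta: "\<eta> > 0" using eps assms(4) by (simp add: \<eta>_def)
  obtain t where tV: "norm (?a t - V0) < \<eta> * eps / (4 * (chat + 1))"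
    using LIMSEQ_D[OF conv, of "\<eta> * eps / (4 * (chat + 1))"] eps eta assms(4) by auto
  define r where "r = V0 - ?a t"
  have r: "r \<ge> 0" "r < \<eta> * eps / (4 * (chat + 1))" using tV le[of t] by (auto simp: r_def)
  have sumle: "(\<Sum>\<rho>\<in>lv t. aa S' \<rho> n) \<le> 2 ^ t * r" for n
    unfolding sumaa[OF mS] r_def using le[of "t + n"] by (intro mult_left_mono) auto
  have aale: "aa S' \<rho> n \<le> 2 ^ t * r" if "\<rho> \<in> lv t" for \<rho> n
  proof -
    have "aa S' \<rho> n \<le> (\<Sum>\<rho>\<in>lv t. aa S' \<rho> n)"
      by (rule member_le_sum) (use that lv_finite aa_nonneg in auto)
    then show ?thesis using sumle[of n] by linarith
  qed
  define L where "L \<rho> = (SUP n. aa S' \<rho> n)" for \<rho>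
  have Lconv: "aa S' \<rho> \<longlonglongrightarrow> L \<rho>" if "\<rho> \<in> lv t" for \<rho>
    unfolding L_def
    by (rule LIMSEQ_incseq_SUP[OF _ aa_incseq[OF mS]]) (use aale[OF that] in \<open>auto intro!: bdd_aboveI2\<close>)
  have Lnn: "L \<rho> \<ge> 0" if "\<rho> \<in> lv t" for \<rho>
    using incseq_le[OF aa_incseq[OF mS] Lconv[OF that], of 0] by (simp add: aa0)
  have VL: "Var S' \<rho> = ereal (L \<rho>)" if "\<rho> \<in> lv t" for \<rho>
    by (rule Var_eq[OF Lconv[OF that]])
  have "(\<lambda>n. \<Sum>\<rho>\<in>lv t. aa S' \<rho> n) \<longlonglongrightarrow> (\<Sum>\<rho>\<in>lv t. L \<rho>)"
    by (rule tendsto_sum) (rule Lconv)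
  then have sumL: "(\<Sum>\<rho>\<in>lv t. L \<rho>) \<le> 2 ^ t * r"
    by (rule LIMSEQ_le_const2) (use sumle in auto)
  define f where "f \<rho> = chat * (\<eta> + max 0 (L \<rho>) / \<eta>) + eps / 4" for \<rho>
  have fpos: "f \<sigma> > 0" for \<sigma>
    unfolding f_def using eps eta assms(4) by (intro add_nonneg_pos mult_nonneg_nonneg) auto
  define D where "D \<rho> = avg (\<lambda>\<sigma>. f (take t \<sigma>)) \<rho> (t - length \<rho>)" for \<rho>
  have mD: "martingale D" unfolding D_def by (rule D_mart[OF fpos])
  have Dpos: "D \<rho> > 0" for \<rho> unfolding D_def by (rule avg_pos) (rule fpos)
  define S where "S \<rho> = S' \<rho> + D \<rho>" for \<rho>
  have mSS: "martingale S"
    using mS mD Dpos unfolding martingale_def S_def by (auto simp: algebra_simps intro: add_nonneg_nonneg less_imp_le)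
  have D0: "D [] = (\<Sum>\<rho>\<in>lv t. f \<rho>) / 2 ^ t"
    unfolding D_def avg_def by (simp add: lv_def)
  have "(\<Sum>\<rho>\<in>lv t. f \<rho>) = (\<Sum>\<rho>\<in>lv t. (chat * \<eta> + eps / 4) + (chat / \<eta>) * L \<rho>)"
    unfolding f_def by (rule sum.cong) (auto simp: Lnn algebra_simps)
  also have "\<dots> = 2 ^ t * (chat * \<eta> + eps / 4) + (chat / \<eta>) * (\<Sum>\<rho>\<in>lv t. L \<rho>)"
    by (simp add: sum.distrib sum_distrib_left card_lv)
  also have "\<dots> \<le> 2 ^ t * (chat * \<eta> + eps / 4) + (chat / \<eta>) * (2 ^ t * r)"
    using sumL eta assms(4) by (intro add_left_mono mult_left_mono) auto
  finally have "D [] \<le> chat * \<eta> + eps / 4 + (chat / \<eta>) * r"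
    unfolding D0 by (simp add: field_simps)
  moreover have "chat * \<eta> < eps / 4"
  proof -
    have "chat * \<eta> = eps / 4 * (chat / (chat + 1))" using assms(4) by (simp add: \<eta>_def field_simps)
    also have "\<dots> < eps / 4" using eps assms(4) by (simp add: field_simps)
    finally show ?thesis .
  qed
  moreover have "(chat / \<eta>) * r \<le> eps / 4"
  proof -
    have "(chat / \<eta>) * r \<le> (chat / \<eta>) * (\<eta> * eps / (4 * (chat + 1)))"
      using r eta assms(4) by (intro mult_left_mono) auto
    also have "\<dots> = eps / 4 * (chat / (chat + 1))" using eta assms(4) by (simp add: field_simps)
    also have "\<dots> \<le> eps / 4" using eps assms(4) by (simp add: field_simps)
    finally show ?thesis .
  qed
  ultimately have "D [] < eps" using eps by linarith
  then have c1: "S [] < c" unfolding S_def eps_def by simp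
  have c2: "\<forall>\<rho>. S \<rho> > S' \<rho>" using Dpos by (simp add: S_def)
  have c3: "S \<rho> > S' \<rho> + chat * sqrt (real_of_ereal (Var S' \<rho>))" if "length \<rho> = t" for \<rho>
  proof -
    have lt: "\<rho> \<in> lv t" using that by (simp add: lv_def)
    have "D \<rho> = f \<rho>" unfolding D_def using that by (simp add: avg0)
    moreover have "chat * sqrt (L \<rho>) \<le> chat * (\<eta> + L \<rho> / \<eta>)"
      using sqrt_le_eta[OF Lnn[OF lt] eta] assms(4) by (rule mult_left_mono)
    ultimately have "D \<rho> > chat * sqrt (L \<rho>)" unfolding f_def using Lnn[OF lt] eps by simp
    then show ?thesis unfolding S_def VL[OF lt] by simp
  qed
  show ?thesis using mSS c1 c2 c3 by blast
qed

end
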